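(* Fix an integer $d\ge 8$. The sequence $\psi^{(k)}(\mathbf{0})$, $k=0,1,2,\dots$, does not converge pointwise, where $\mathbf{0}=(0,0,\dots)$ and $\psi^{(k)}$ is the $k$-fold iterate of $\psi$.
   Context: For a probability distribution $z=(z_i)_{i\in\mathbb{Z}}$ on $\mathbb{Z}$ set $A(z)_i=(z_{i-1}+z_i+z_{i+1})^d$ and $F(z)=A(z)/\sum_{i}A(z)_i$. Let $\mathcal{E}$ be the set of symmetric ($z_i=z_{-i}$) probability distributions on $\mathbb{Z}$ whose support is an interval of $\mathbb{Z}$ or all of $\mathbb{Z}$. Define $\mathsf R\colon\mathcal{E}\to[0,\infty)^{\{1,2,\dots\}}$ by $\mathsf R(z)_i=z_i/z_{i-1}$ if $z_{i-1}\ne0$ and $0$ otherwise; $\mathsf R$ is injective on $\mathcal{E}$, $\mathcal{R}:=\mathsf R(\mathcal{E})$, and $\psi:=\mathsf R\circ F\circ\mathsf R^{-1}\colon\mathcal{R}\to\mathcal{R}$. Explicitly $\psi(x)_1=\big(\frac{1+x_1+x_1x_2}{1+2x_1}\big)^d$ and $\psi(x)_n=x_{n-1}^d\big(\frac{1+x_n+x_nx_{n+1}}{1+x_{n-1}+x_{n-1}x_n}\big)^d$ for $n\ge2$. Note $\mathbf 0=\mathsf R(\delta_0)\in\mathcal{R}$. *)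

theory Defs
  imports Complex_Main
begin

text \<open>Sequences x = (x_1, x_2, ...) in [0,oo)^{1,2,...} are represented as functions
  nat => real; the entry at index 0 is unused (and psi always sets it to 0).
  psi is given by the explicit formula from the paper.\<close>

definition psi :: "nat \<Rightarrow> (nat \<Rightarrow> real) \<Rightarrow> (nat \<Rightarrow> real)" where
  "psi d x n =
     (if n = 0 then 0
      else if n = 1 then ((1 + x 1 + x 1 * x 2) / (1 + 2 * x 1)) ^ d
      else x (n - 1) ^ d *
           ((1 + x n + x n * x (n + 1)) / (1 + x (n - 1) + x (n - 1) * x n)) ^ d)"

end

theory Submission
  imports Defs
begin

definition Inv :: "(nat \<Rightarrow> real) \<Rightarrow> bool" where
  "Inv x \<longleftrightarrow> (\<forall>n\<ge>1. 0 \<le> x n) \<and> x 1 \<le> 1 \<and> (\<forall>n\<ge>2. x n \<le> 1/100)"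

lemma psi_simp2:
  assumes "n \<ge> 2"
  shows "psi d x n = (x (n - 1) * ((1 + x n + x n * x (n + 1)) / (1 + x (n - 1) + x (n - 1) * x n))) ^ d"
proof -
  have "psi d x n = x (n - 1) ^ d * ((1 + x n + x n * x (n + 1)) / (1 + x (n - 1) + x (n - 1) * x n)) ^ d"
    using assms by (simp add: psi_def)
  then show ?thesis by (simp only: power_mult_distrib)
qed

lemma psi_simp1: "psi d x 1 = ((1 + x 1 + x 1 * x 2) / (1 + 2 * x 1)) ^ d"
  by (simp add: psi_def)

lemma pow_small:
  fixes y :: real
  assumes "0 \<le> y" "y \<le> 13/25" "d \<ge> 8"
  shows "y ^ d \<le> 1/100"
proof -
  have "y ^ d \<le> y ^ 8" using assms by (intro power_decreasing) auto
  also have "\<dots> \<le> (13/25) ^ 8" using assms by (intro power_mono) auto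
  also have "\<dots> \<le> 1/100" by (simp add: power_divide)
  finally show ?thesis .
qed

lemma psi_Inv:
  assumes "Inv x" "d \<ge> 8"
  shows "Inv (psi d x)"
proof -
  have nn: "\<And>n. n \<ge> 1 \<Longrightarrow> 0 \<le> x n" and x1: "x 1 \<le> 1" and sm: "\<And>n. n \<ge> 2 \<Longrightarrow> x n \<le> 1/100"
    using assms unfolding Inv_def by auto
  have A: "0 \<le> psi d x n" if "n \<ge> 1" for n
  proof (cases "n = 1")
    case True
    have "0 \<le> x 1" "0 \<le> x 2" using nn by auto
    then have "0 \<le> psi d x 1" by (simp only: psi_simp1) simp
    then show ?thesis using True by simp
  next
    case False
    then have "n \<ge> 2" using that by auto
    have "0 \<le> x (n-1)" "0 \<le> x n" "0 \<le> x (n+1)" using nn \<open>n \<ge> 2\<close> by auto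
    then show ?thesis using \<open>n \<ge> 2\<close> by (simp add: psi_simp2)
  qed
  have B: "psi d x 1 \<le> 1"
  proof -
    have h: "0 \<le> x 1" "0 \<le> x 2" "x 2 \<le> 1/100" using nn sm by auto
    have "x 1 * x 2 \<le> x 1" using h by (simp add: mult_left_le)
    then have "(1 + x 1 + x 1 * x 2) / (1 + 2 * x 1) \<le> 1" using h by simp
    moreover have "0 \<le> (1 + x 1 + x 1 * x 2) / (1 + 2 * x 1)" using h by simp
    ultimately show ?thesis by (subst psi_simp1) (simp add: power_le_one)
  qed
  have C: "psi d x n \<le> 1/100" if "n \<ge> 2" for n
  proof -
    have h: "0 \<le> x (n-1)" "0 \<le> x n" "0 \<le> x (n+1)" "x n \<le> 1/100" "x (n+1) \<le> 1/100"
      using nn sm that by auto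
    have N: "1 + x n + x n * x (n + 1) \<le> 10101/10000"
    proof -
      have "x n * x (n+1) \<le> (1/100) * (1/100)" using h by (intro mult_mono) auto
      then show ?thesis using h by simp
    qed
    define D where "D = 1 + x (n - 1) + x (n - 1) * x n"
    have D1: "1 + x (n-1) \<le> D" using h unfolding D_def by simp
    define y where "y = x (n - 1) * ((1 + x n + x n * x (n + 1)) / D)"
    have y0: "0 \<le> y" using h D1 unfolding y_def by simp
    have "y \<le> 13/25"
    proof -
      have "y = x (n-1) / D * (1 + x n + x n * x (n + 1))" unfolding y_def by simp
      also have "\<dots> \<le> 1/2 * (10101/10000)"
      proof (rule mult_mono)
        show "x (n-1) / D \<le> 1/2"
        proof (cases "n = 2")
          case True
          have "x (n-1) \<le> 1" using True x1 by simp
          then show ?thesis using D1 h by (simp add: divide_simps)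
        next
          case False
          then have "x (n-1) \<le> 1/100" using sm that by auto
          then show ?thesis using D1 h by (simp add: divide_simps)
        qed
      qed (use N h D1 in auto)
      finally show ?thesis by simp
    qed
    then have "y ^ d \<le> 1/100" using pow_small y0 assms by auto
    then show ?thesis using that by (simp add: psi_simp2 y_def D_def)
  qed
  show ?thesis unfolding Inv_def using A B C by auto
qed


lemma B_to_A:
  assumes "Inv x" "x 1 \<le> b" "a \<le> ((1+b)/(1+2*b))^d"
  shows "a \<le> psi d x 1"
proof -
  have h: "0 \<le> x 1" "0 \<le> x 2" using assms(1) unfolding Inv_def by auto
  have "(1+b)/(1+2*b) \<le> (1 + x 1)/(1 + 2 * x 1)"
    using h assms(2) by (simp add: divide_simps) (auto simp: algebra_simps)
  also have "\<dots> \<le> (1 + x 1 + x 1 * x 2) / (1 + 2 * x 1)"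
    using h by (simp add: divide_right_mono)
  finally have "((1+b)/(1+2*b))^d \<le> ((1 + x 1 + x 1 * x 2) / (1 + 2 * x 1))^d"
    using h assms(2) by (intro power_mono) auto
  then show ?thesis using assms(3) by (subst psi_simp1) linarith
qed

lemma A_to_B:
  assumes "Inv x" "a \<le> x 1" "0 \<le> a" "((1 + a * (101/100))/(1 + 2*a))^d \<le> b"
  shows "psi d x 1 \<le> b"
proof -
  have h: "0 \<le> x 1" "0 \<le> x 2" "x 2 \<le> 1/100" using assms(1) unfolding Inv_def by auto
  have "x 1 * x 2 \<le> x 1 * (1/100)" using h by (intro mult_left_mono) auto
  then have "(1 + x 1 + x 1 * x 2) / (1 + 2 * x 1) \<le> (1 + x 1 * (101/100)) / (1 + 2 * x 1)"
    using h by (intro divide_right_mono) auto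
  also have "\<dots> \<le> (1 + a * (101/100))/(1 + 2*a)"
    using h assms(2,3) by (simp add: divide_simps) (auto simp: algebra_simps)
  finally have "((1 + x 1 + x 1 * x 2) / (1 + 2 * x 1))^d \<le> ((1 + a * (101/100))/(1 + 2*a))^d"
    using h by (intro power_mono) auto
  then show ?thesis using assms(4) by (subst psi_simp1) linarith
qed

lemma alternating:
  assumes "d \<ge> 8" "0 \<le> a" "a \<le> ((1+b)/(1+2*b))^d" "((1 + a * (101/100))/(1 + 2*a))^d \<le> b" "0 \<le> b"
  shows "Inv ((psi d ^^ k) (\<lambda>_. 0)) \<and> (even k \<longrightarrow> ((psi d ^^ k) (\<lambda>_. 0)) 1 \<le> b)
         \<and> (odd k \<longrightarrow> a \<le> ((psi d ^^ k) (\<lambda>_. 0)) 1)"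
proof (induction k)
  case 0
  then show ?case using assms by (simp add: Inv_def)
next
  case (Suc k)
  let ?x = "(psi d ^^ k) (\<lambda>_. 0)"
  have I: "Inv ?x" using Suc by blast
  have "Inv (psi d ?x)" using psi_Inv[OF I assms(1)] .
  moreover have "even (Suc k) \<longrightarrow> psi d ?x 1 \<le> b"
    using Suc A_to_B[OF I _ assms(2,4)] by auto
  moreover have "odd (Suc k) \<longrightarrow> a \<le> psi d ?x 1"
    using Suc B_to_A[OF I _ assms(3)] by auto
  ultimately show ?case by simp
qed

lemma big_d_aux: "n \<ge> 12 \<Longrightarrow> real n * (3/4)^n \<le> 2/5"
proof (induction n rule: nat_induct_at_least)
  case base
  then show ?case by (simp add: power_divide)
next
  case (Suc n)
  have "real (Suc n) * (3/4)^(Suc n) = (3 * real (Suc n) / 4) * (3/4)^n" by simp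
  also have "\<dots> \<le> real n * (3/4)^n"
    using Suc by (intro mult_right_mono) auto
  finally show ?case using Suc.IH by linarith
qed

lemma exists_ab:
  assumes "d \<ge> 8"
  shows "\<exists>a b. 0 \<le> a \<and> 0 \<le> b \<and> b < a \<and> a \<le> ((1+b)/(1+2*b))^d \<and> ((1 + a * (101/100))/(1 + 2*a))^d \<le> (b::real)"
proof -
  consider "d = 8" | "d = 9" | "d = 10" | "d = 11" | "d \<ge> 12" using assms by linarith
  then show ?thesis
  proof cases
    case 1
    show ?thesis by (rule exI[of _ "8/25"], rule exI[of _ "9/50"]) (simp add: 1 power_divide)
  next
    case 2
    show ?thesis by (rule exI[of _ "3/5"], rule exI[of _ "3/50"]) (simp add: 2 power_divide)
  next
    case 3
    show ?thesis by (rule exI[of _ "3/4"], rule exI[of _ "3/100"]) (simp add: 3 power_divide)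
  next
    case 4
    show ?thesis by (rule exI[of _ "4/5"], rule exI[of _ "1/50"]) (simp add: 4 power_divide)
  next
    case 5
    define b :: real where "b = (3/4)^d"
    have b0: "0 \<le> b" unfolding b_def by simp
    have "b \<le> (3/4)^2" unfolding b_def using 5 by (intro power_decreasing) auto
    then have ba: "b < 3/5" by (auto simp: power_divide)
    have db: "real d * b \<le> 2/5" unfolding b_def using big_d_aux[OF 5] .
    have bern: "1 - real d * b \<le> (1 - b)^d"
      using Bernoulli_inequality[of "-b" d] ba by simp
    have "(1 - b)^d \<le> ((1+b)/(1+2*b))^d"
    proof (rule power_mono)
      have e: "(1-b)*(1+2*b) = 1 + b - 2*(b*b)" by algebra
      have "0 \<le> b*b" using b0 by simp
      then have "(1-b)*(1+2*b) \<le> 1+b" using e by linarith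
      then show "1 - b \<le> (1+b)/(1+2*b)" using b0 by (simp add: pos_le_divide_eq)
    qed (use ba in linarith)
    with db bern have A: "3/5 \<le> ((1+b)/(1+2*b))^d" by linarith
    have q: "(1 + 3/5 * (101/100))/(1 + 2*(3/5::real)) \<le> 3/4" by simp
    have B: "((1 + 3/5 * (101/100))/(1 + 2*(3/5::real)))^d \<le> b"
      unfolding b_def by (rule power_mono[OF q]) simp
    show ?thesis
      apply (rule exI[of _ "3/5"], rule exI[of _ b])
      apply (intro conjI)
          apply simp
         apply (fact b0)
        apply (fact ba)
       apply (fact A)
      apply (fact B)
      done
  qed
qed

lemma noncon:
  fixes f :: "nat \<Rightarrow> real"
  assumes "convergent f" "b < a" "\<And>k. f (2*k) \<le> b" "\<And>k. a \<le> f (2*k+1)"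
  shows False
proof -
  have "Cauchy f" using assms(1) by (rule convergent_Cauchy)
  moreover have "0 < a - b" using assms(2) by simp
  ultimately obtain M where M: "\<forall>m\<ge>M. \<forall>n\<ge>M. norm (f m - f n) < a - b"
    using CauchyD by blast
  have "2*M \<ge> M" "2*M+1 \<ge> M" by auto
  with M have "norm (f (2*M) - f (2*M+1)) < a - b" by blast
  moreover have "f (2*M) \<le> b" by (rule assms(3))
  moreover have "a \<le> f (2*M+1)" by (rule assms(4))
  ultimately show False by (simp only: real_norm_def abs_less_iff) linarith
qed

theorem theorem2p5:
  fixes d :: nat
  assumes "d \<ge> 8"
  shows "\<not> (\<forall>n\<ge>1. convergent (\<lambda>k. ((psi d ^^ k) (\<lambda>_. 0)) n))"
proof
  assume H: "\<forall>n\<ge>1. convergent (\<lambda>k. ((psi d ^^ k) (\<lambda>_. 0)) n)"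
  obtain a b :: real where ab: "0 \<le> a" "0 \<le> b" "b < a" "a \<le> ((1+b)/(1+2*b))^d"
    "((1 + a * (101/100))/(1 + 2*a))^d \<le> b"
    using exists_ab[OF assms] by blast
  have c: "convergent (\<lambda>k. ((psi d ^^ k) (\<lambda>_. 0)) 1)" using H by simp
  show False
  proof (rule noncon[OF c ab(3)])
    fix k :: nat
    have "even (2*k)" by simp
    then show "((psi d ^^ (2*k)) (\<lambda>_. 0)) 1 \<le> b"
      using alternating[OF assms ab(1,4,5,2), of "2*k"] by blast
    have "odd (2*k+1)" by simp
    then show "a \<le> ((psi d ^^ (2*k+1)) (\<lambda>_. 0)) 1"
      using alternating[OF assms ab(1,4,5,2), of "2*k+1"] by blast
  qed
qed

end
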